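(* Let $X$, $Y$ be real Banach spaces, $\Omega$ a measure space, $Z:=L^2(\Omega)$, and $e:Y\to Z$ a linear continuous dense embedding. Let $f:X\to\mathbb{R}$ and $g:X\to Y$ be continuously Fréchet differentiable, and assume that $y\mapsto|y|$ is well-defined and continuous on $Y$. Let $(x^k)$ be generated by the augmented Lagrangian algorithm described in the context, where in Step 2 the iterate $x^{k+1}$ is chosen such that $L_{\rho_k}'(x^{k+1},w^k)\to 0$ in $X^*$, and assume $\rho_k\to\infty$. Then every (strong) limit point $\bar x$ of $(x^k)$ which is feasible ($g(\bar x)\le 0$) satisfies the AKKT conditions: there exist sequences $y^k\to\bar x$ in $X$ and $(\mu^k)\subset K_Y^+$ with $f'(y^k)+g'(y^k)^*\mu^k\to 0$ and $\langle\mu^k,g_-(y^k)\rangle\to 0$.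
   Context: The order on $Y$ is induced by $Z$: $K_Y:=\{y\in Y:e(y)\ge 0\text{ a.e.}\}$, $y\le 0$ means $-y\in K_Y$; $K_Y^+:=\{\mu\in Y^*:\langle\mu,y\rangle\ge 0\ \forall y\in K_Y\}$, with $\langle\cdot,\cdot\rangle$ the duality pairing of $Y^*$ and $Y$; $Z\cong Z^*$ is regarded as a subspace of $Y^*$ via $e^*$. For $z\in Z$, $z_+:=\max\{z,0\}$, $z_-:=\max\{-z,0\}$ pointwise; $|y|, y_\pm$ for $y\in Y$ are defined via these pointwise operations ("well-defined on $Y$" means they land in $Y$); $g_-(x):=(g(x))_-$. The augmented Lagrangian is $L_\rho(x,\lambda):=f(x)+\frac{\rho}{2}\|(g(x)+\lambda/\rho)_+\|_Z^2$, with $x$-derivative $f'(x)+g'(x)^*(\lambda+\rho g(x))_+$. Algorithm: (S.0) Choose $(x^0,\lambda^0)\in X\times Z$, $\rho_0>0$, $w^{\max}\in Z$ with $w^{\max}\ge 0$, $\gamma>1$, $\tau\in(0,1)$; $k=0$. (S.2) Choose $w^k\in Z$ with $0\le w^k\le w^{\max}$ a.e. and compute an approximate minimizer $x^{k+1}$ of $L_{\rho_k}(\cdot,w^k)$. (S.3) Set $\lambda^{k+1}:=(w^k+\rho_k g(x^{k+1}))_+$. If $k=0$ or $\|\min\{-g(x^{k+1}),w^k/\rho_k\}\|_Z\le\tau\|\min\{-g(x^k),w^{k-1}/\rho_{k-1}\}\|_Z$ (pointwise min), set $\rho_{k+1}:=\rho_k$; else $\rho_{k+1}:=\gamma\rho_k$.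 (S.4) $k\leftarrow k+1$, go to (S.2). The algorithm is run without stopping. *)

theory Defs
  imports "HOL-Analysis.Analysis"
begin

text \<open>Z = L^2(M), represented by square-integrable measurable real functions
  on the measure space M (modulo a.e. equality, which is handled by stating
  all identities in Z almost everywhere).\<close>

definition inL2 :: "'w measure \<Rightarrow> ('w \<Rightarrow> real) \<Rightarrow> bool" where
  "inL2 M u \<longleftrightarrow> u \<in> borel_measurable M \<and> integrable M (\<lambda>t. (u t)\<^sup>2)"

definition L2norm :: "'w measure \<Rightarrow> ('w \<Rightarrow> real) \<Rightarrow> real" where
  "L2norm M u = sqrt (integral\<^sup>L M (\<lambda>t. (u t)\<^sup>2))"

definition dense_embedding :: "'w measure \<Rightarrow> ('y::real_normed_vector \<Rightarrow> 'w \<Rightarrow> real) \<Rightarrow> bool" where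
  "dense_embedding M e \<longleftrightarrow>
     (\<forall>y. inL2 M (e y)) \<and>
     (\<forall>y z. e (y + z) = (\<lambda>t. e y t + e z t)) \<and>
     (\<forall>c y. e (c *\<^sub>R y) = (\<lambda>t. c * e y t)) \<and>
     (\<exists>C. \<forall>y. L2norm M (e y) \<le> C * norm y) \<and>
     (\<forall>y. (AE t in M. e y t = 0) \<longrightarrow> y = 0) \<and>
     (\<forall>u. inL2 M u \<longrightarrow> (\<forall>\<epsilon>>0. \<exists>y. L2norm M (\<lambda>t. e y t - u t) < \<epsilon>))"

definition KYplus :: "'w measure \<Rightarrow> ('y::real_normed_vector \<Rightarrow> 'w \<Rightarrow> real) \<Rightarrow> ('y \<Rightarrow>\<^sub>L real) set" where
  "KYplus M e = {\<mu>. \<forall>y. (AE t in M. e y t \<ge> 0) \<longrightarrow> blinfun_apply \<mu> y \<ge> 0}"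

definition negY :: "('y::real_normed_vector \<Rightarrow> 'y) \<Rightarrow> 'y \<Rightarrow> 'y" where
  "negY absY y = (1/2) *\<^sub>R (absY y - y)"

end

theory Submission
  imports Defs
begin


lemma inL2_mult_integrable:
  assumes "inL2 M u" "inL2 M v"
  shows "integrable M (\<lambda>t. u t * v t)"
proof (rule Bochner_Integration.integrable_bound[where f="\<lambda>t. ((u t)\<^sup>2 + (v t)\<^sup>2)/2"])
  show "integrable M (\<lambda>t. ((u t)\<^sup>2 + (v t)\<^sup>2)/2)" using assms unfolding inL2_def by auto
  show "(\<lambda>t. u t * v t) \<in> borel_measurable M" using assms unfolding inL2_def by auto
  show "AE t in M. norm (u t * v t) \<le> norm (((u t)\<^sup>2 + (v t)\<^sup>2)/2)"
  proof (rule AE_I2)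
    fix t
    have "2 * \<bar>u t * v t\<bar> \<le> (u t)\<^sup>2 + (v t)\<^sup>2"
      using sum_squares_bound[of "\<bar>u t\<bar>" "\<bar>v t\<bar>"]
      by (simp add: abs_mult power2_abs mult.assoc)
    then show "norm (u t * v t) \<le> norm (((u t)\<^sup>2 + (v t)\<^sup>2)/2)" by simp
  qed
qed

lemma inL2_add: "inL2 M u \<Longrightarrow> inL2 M v \<Longrightarrow> inL2 M (\<lambda>t. u t + v t)"
proof -
  assume a: "inL2 M u" "inL2 M v"
  have i: "integrable M (\<lambda>t. u t * v t)" using inL2_mult_integrable[OF a] .
  have "integrable M (\<lambda>t. (u t)\<^sup>2 + (v t)\<^sup>2 + 2 * (u t * v t))"
    using a i unfolding inL2_def
    by (auto intro!: Bochner_Integration.integrable_add Bochner_Integration.integrable_mult_right)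
  then show ?thesis using a unfolding inL2_def power2_sum by (auto simp: mult.assoc)
qed

lemma inL2_cmult: "inL2 M u \<Longrightarrow> inL2 M (\<lambda>t. c * u t)"
  unfolding inL2_def power_mult_distrib by auto

lemma inL2_max0: "inL2 M u \<Longrightarrow> inL2 M (\<lambda>t. max (u t) 0)"
  unfolding inL2_def
proof (intro conjI)
  assume a: "u \<in> borel_measurable M \<and> integrable M (\<lambda>t. (u t)\<^sup>2)"
  then show m: "(\<lambda>t. max (u t) 0) \<in> borel_measurable M" by auto
  show "integrable M (\<lambda>t. (max (u t) 0)\<^sup>2)"
    apply (rule Bochner_Integration.integrable_bound[where f="\<lambda>t. (u t)\<^sup>2"])
    using a m apply auto
    by (simp add: max_def)
qed


lemma inL2_abs: "inL2 M u \<Longrightarrow> inL2 M (\<lambda>t. \<bar>u t\<bar>)"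
  unfolding inL2_def by auto

lemma pointwise_bound:
  fixes r a w wm :: real
  assumes "r > 0" "0 \<le> w" "w \<le> wm"
  shows "0 \<le> max (w + r * a) 0 * (1/2 * (\<bar>a\<bar> - a)) \<and>
         max (w + r * a) 0 * (1/2 * (\<bar>a\<bar> - a)) \<le> wm\<^sup>2 / r"
proof (cases "a \<ge> 0")
  case True
  then show ?thesis using assms by simp
next
  case False
  define s where "s = - a"
  have s: "s > 0" using False s_def by simp
  have n: "1/2 * (\<bar>a\<bar> - a) = s" using False s_def by simp
  show ?thesis
  proof (cases "w + r * a > 0")
    case False
    then show ?thesis using n s assms by simp
  next
    case True
    have m: "max (w + r * a) 0 = w - r * s" using True s_def by simp
    have rs: "r * s < w" using True s_def by simp
    have "(w - r * s) * s \<le> w * s" using assms s by (simp add: mult_nonneg_nonneg)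
    also have "w * s \<le> w * (w / r)"
      using rs assms by (intro mult_left_mono) (simp_all add: field_simps)
    also have "\<dots> = w\<^sup>2 / r" by (simp add: power2_eq_square)
    also have "\<dots> \<le> wm\<^sup>2 / r" using assms by (intro divide_right_mono power_mono) auto
    finally have "(w - r * s) * s \<le> wm\<^sup>2 / r" .
    moreover have "0 \<le> (w - r * s) * s" using rs s by simp
    ultimately show ?thesis using m n by simp
  qed
qed

theorem theorem6p4:
  fixes M :: "'w measure"
    and e :: "'y::banach \<Rightarrow> 'w \<Rightarrow> real"
    and f :: "'x::banach \<Rightarrow> real" and f' :: "'x \<Rightarrow> ('x \<Rightarrow>\<^sub>L real)"
    and g :: "'x \<Rightarrow> 'y" and g' :: "'x \<Rightarrow> ('x \<Rightarrow>\<^sub>L 'y)"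
    and absY :: "'y \<Rightarrow> 'y"
    and x :: "nat \<Rightarrow> 'x" and lam w :: "nat \<Rightarrow> 'w \<Rightarrow> real" and \<rho> :: "nat \<Rightarrow> real"
    and wmax :: "'w \<Rightarrow> real" and \<gamma> \<tau> :: real
    and xbar :: 'x
  assumes emb: "dense_embedding M e"
    and f_deriv: "\<And>z. (f has_derivative blinfun_apply (f' z)) (at z)"
    and f'_cont: "continuous_on UNIV f'"
    and g_deriv: "\<And>z. (g has_derivative blinfun_apply (g' z)) (at z)"
    and g'_cont: "continuous_on UNIV g'"
    and absY: "\<And>y. AE t in M. e (absY y) t = \<bar>e y t\<bar>"
    and absY_cont: "continuous_on UNIV absY"
    and lam0: "inL2 M (lam 0)"
    and rho0: "\<rho> 0 > 0"
    and wmax: "inL2 M wmax" "AE t in M. wmax t \<ge> 0"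
    and gamma: "\<gamma> > 1" and tau: "0 < \<tau>" "\<tau> < 1"
    and w_Z: "\<And>k. inL2 M (w k)"
    and w_bounds: "\<And>k. AE t in M. 0 \<le> w k t \<and> w k t \<le> wmax t"
    and lam_upd: "\<And>k. AE t in M. lam (Suc k) t = max (w k t + \<rho> k * e (g (x (Suc k))) t) 0"
    and rho_upd: "\<And>k. \<rho> (Suc k) =
        (if k = 0 \<or> L2norm M (\<lambda>t. min (- e (g (x (Suc k))) t) (w k t / \<rho> k))
                     \<le> \<tau> * L2norm M (\<lambda>t. min (- e (g (x k)) t) (w (k - 1) t / \<rho> (k - 1)))
         then \<rho> k else \<gamma> * \<rho> k)"
    and approx_min: "(\<lambda>k. onorm (\<lambda>h. blinfun_apply (f' (x (Suc k))) h
            + integral\<^sup>L M (\<lambda>t. max (w k t + \<rho> k * e (g (x (Suc k))) t) 0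
                                 * e (blinfun_apply (g' (x (Suc k))) h) t)))
          \<longlonglongrightarrow> 0"
    and rho_inf: "filterlim \<rho> at_top sequentially"
    and limpt: "\<exists>\<phi>. strict_mono \<phi> \<and> (x \<circ> \<phi>) \<longlonglongrightarrow> xbar"
    and feasible: "AE t in M. e (g xbar) t \<le> 0"
  shows "\<exists>y :: nat \<Rightarrow> 'x. \<exists>\<mu> :: nat \<Rightarrow> ('y \<Rightarrow>\<^sub>L real).
           y \<longlonglongrightarrow> xbar \<and> (\<forall>k. \<mu> k \<in> KYplus M e) \<and>
           (\<lambda>k. norm (f' (y k) + (\<mu> k o\<^sub>L g' (y k)))) \<longlonglongrightarrow> 0 \<and>
           (\<lambda>k. blinfun_apply (\<mu> k) (negY absY (g (y k)))) \<longlonglongrightarrow> 0"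
proof -
  note D = emb[unfolded dense_embedding_def]
  have eL2: "\<And>y. inL2 M (e y)" using D[THEN conjunct1] by blast
  have eadd: "\<And>y z. e (y + z) = (\<lambda>t. e y t + e z t)" using D[THEN conjunct2, THEN conjunct1] by blast
  have escale: "\<And>c y. e (c *\<^sub>R y) = (\<lambda>t. c * e y t)"
    using D[THEN conjunct2, THEN conjunct2, THEN conjunct1] by blast
  obtain C where C: "\<And>y. L2norm M (e y) \<le> C * norm y"
    using D[THEN conjunct2, THEN conjunct2, THEN conjunct2, THEN conjunct1] by blast
  define C' where "C' = max C 0"
  have C'0: "C' \<ge> 0" unfolding C'_def by simp
  have eminus: "\<And>a b. e (a - b) = (\<lambda>t. e a t - e b t)"
  proof -
    fix a b :: 'y
    have "e (a - b) = e (a + (-1) *\<^sub>R b)" by simp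
    also have "\<dots> = (\<lambda>t. e a t + e ((-1) *\<^sub>R b) t)" by (rule eadd)
    also have "\<dots> = (\<lambda>t. e a t + (-1) * e b t)" by (simp only: escale)
    also have "\<dots> = (\<lambda>t. e a t - e b t)" by simp
    finally show "e (a - b) = (\<lambda>t. e a t - e b t)" .
  qed
  have esq: "\<And>y. integral\<^sup>L M (\<lambda>t. (e y t)\<^sup>2) \<le> (C' * norm y)\<^sup>2"
  proof -
    fix y
    have I0: "0 \<le> integral\<^sup>L M (\<lambda>t. (e y t)\<^sup>2)" by (rule integral_nonneg_AE) simp
    have "sqrt (integral\<^sup>L M (\<lambda>t. (e y t)\<^sup>2)) \<le> C' * norm y"
    proof -
      have "C * norm y \<le> C' * norm y" unfolding C'_def by (intro mult_right_mono) auto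
      then show ?thesis using C[of y] unfolding L2norm_def by linarith
    qed
    then have "(sqrt (integral\<^sup>L M (\<lambda>t. (e y t)\<^sup>2)))\<^sup>2 \<le> (C' * norm y)\<^sup>2"
      by (intro power_mono) auto
    then show "integral\<^sup>L M (\<lambda>t. (e y t)\<^sup>2) \<le> (C' * norm y)\<^sup>2" using I0 by simp
  qed
  define \<Lambda> where "\<Lambda> k t = max (w k t + \<rho> k * e (g (x (Suc k))) t) 0" for k t
  have \<Lambda>L2: "inL2 M (\<Lambda> k)" for k
    unfolding \<Lambda>_def by (intro inL2_max0 inL2_add inL2_cmult w_Z eL2)
  have \<Lambda>0: "\<Lambda> k t \<ge> 0" for k t unfolding \<Lambda>_def by simp
  define F where "F k y = integral\<^sup>L M (\<lambda>t. \<Lambda> k t * e y t)" for k y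
  have Fadd: "F k (y + z) = F k y + F k z" for k y z
  proof -
    have "F k (y + z) = integral\<^sup>L M (\<lambda>t. \<Lambda> k t * e y t + \<Lambda> k t * e z t)"
      unfolding F_def eadd by (simp add: distrib_left)
    also have "\<dots> = F k y + F k z" unfolding F_def
      by (rule Bochner_Integration.integral_add; intro inL2_mult_integrable \<Lambda>L2 eL2)
    finally show ?thesis .
  qed
  have Fscale: "F k (r *\<^sub>R y) = r * F k y" for k r y
    unfolding F_def escale by (simp add: mult.left_commute)
  have Fbound0: "\<bar>F k y\<bar> \<le> (integral\<^sup>L M (\<lambda>t. (\<Lambda> k t)\<^sup>2) + integral\<^sup>L M (\<lambda>t. (e y t)\<^sup>2)) / 2" for k y
  proof -
    have int: "integrable M (\<lambda>t. \<Lambda> k t * e y t)" by (intro inL2_mult_integrable \<Lambda>L2 eL2)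
    have i1: "integrable M (\<lambda>t. (\<Lambda> k t)\<^sup>2)" using \<Lambda>L2 unfolding inL2_def by auto
    have i2: "integrable M (\<lambda>t. (e y t)\<^sup>2)" using eL2 unfolding inL2_def by auto
    have "\<bar>F k y\<bar> = norm (integral\<^sup>L M (\<lambda>t. \<Lambda> k t * e y t))" unfolding F_def by simp
    also have "\<dots> \<le> integral\<^sup>L M (\<lambda>t. norm (\<Lambda> k t * e y t))" by (rule integral_norm_bound)
    also have "\<dots> \<le> integral\<^sup>L M (\<lambda>t. ((\<Lambda> k t)\<^sup>2 + (e y t)\<^sup>2) / 2)"
    proof (rule integral_mono)
      show "integrable M (\<lambda>t. norm (\<Lambda> k t * e y t))" using int by (rule integrable_norm)
      show "integrable M (\<lambda>t. ((\<Lambda> k t)\<^sup>2 + (e y t)\<^sup>2) / 2)" using i1 i2 by auto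
      fix t
      have "2 * \<bar>\<Lambda> k t * e y t\<bar> \<le> (\<Lambda> k t)\<^sup>2 + (e y t)\<^sup>2"
        using sum_squares_bound[of "\<bar>\<Lambda> k t\<bar>" "\<bar>e y t\<bar>"]
        by (simp add: abs_mult power2_abs mult.assoc)
      then show "norm (\<Lambda> k t * e y t) \<le> ((\<Lambda> k t)\<^sup>2 + (e y t)\<^sup>2) / 2" by simp
    qed
    also have "\<dots> = (integral\<^sup>L M (\<lambda>t. (\<Lambda> k t)\<^sup>2) + integral\<^sup>L M (\<lambda>t. (e y t)\<^sup>2)) / 2"
      using i1 i2 by simp
    finally show ?thesis .
  qed
  have Fbl: "bounded_linear (F k)" for k
  proof (rule bounded_linear_intro[where K="(integral\<^sup>L M (\<lambda>t. (\<Lambda> k t)\<^sup>2) + C'\<^sup>2) / 2"])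
    show "F k (y + z) = F k y + F k z" for y z by (rule Fadd)
    show "F k (r *\<^sub>R y) = r *\<^sub>R F k y" for r y using Fscale by simp
    fix y :: 'y
    show "norm (F k y) \<le> norm y * ((integral\<^sup>L M (\<lambda>t. (\<Lambda> k t)\<^sup>2) + C'\<^sup>2) / 2)"
    proof (cases "y = 0")
      case True
      have "F k y = 0" using Fscale[of k 0 0] True by simp
      then show ?thesis by simp
    next
      case False
      define y' where "y' = (1 / norm y) *\<^sub>R y"
      have ny: "norm y > 0" using False by simp
      have yy: "y = norm y *\<^sub>R y'" unfolding y'_def using ny by simp
      have ny': "norm y' = 1" unfolding y'_def using ny by simp
      have "\<bar>F k y'\<bar> \<le> (integral\<^sup>L M (\<lambda>t. (\<Lambda> k t)\<^sup>2) + integral\<^sup>L M (\<lambda>t. (e y' t)\<^sup>2)) / 2"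
        by (rule Fbound0)
      also have "\<dots> \<le> (integral\<^sup>L M (\<lambda>t. (\<Lambda> k t)\<^sup>2) + C'\<^sup>2) / 2"
        using esq[of y'] ny' by simp
      finally have b: "\<bar>F k y'\<bar> \<le> (integral\<^sup>L M (\<lambda>t. (\<Lambda> k t)\<^sup>2) + C'\<^sup>2) / 2" .
      have "F k y = norm y * F k y'" using Fscale yy by metis
      then have "norm (F k y) = norm y * \<bar>F k y'\<bar>" by (simp add: abs_mult)
      also have "\<dots> \<le> norm y * ((integral\<^sup>L M (\<lambda>t. (\<Lambda> k t)\<^sup>2) + C'\<^sup>2) / 2)"
        using b ny by (intro mult_left_mono) auto
      finally show ?thesis .
    qed
  qed
  define \<mu> where "\<mu> k = Blinfun (F k)" for k
  have \<mu>app: "blinfun_apply (\<mu> k) = F k" for k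
    unfolding \<mu>_def using Fbl bounded_linear_Blinfun_apply by blast
  have \<mu>K: "\<mu> k \<in> KYplus M e" for k
    unfolding KYplus_def
  proof (safe)
    fix y assume "AE t in M. e y t \<ge> 0"
    then have "AE t in M. 0 \<le> \<Lambda> k t * e y t" using \<Lambda>0 by auto
    then show "0 \<le> blinfun_apply (\<mu> k) y" unfolding \<mu>app F_def by (rule integral_nonneg_AE)
  qed
  have normeq: "norm (f' (x (Suc k)) + (\<mu> k o\<^sub>L g' (x (Suc k)))) =
     onorm (\<lambda>h. blinfun_apply (f' (x (Suc k))) h
            + integral\<^sup>L M (\<lambda>t. max (w k t + \<rho> k * e (g (x (Suc k))) t) 0
                                 * e (blinfun_apply (g' (x (Suc k))) h) t))" for k
    unfolding norm_blinfun.rep_eq by (simp add: \<mu>app F_def \<Lambda>_def plus_blinfun.rep_eq)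
  have lim3: "(\<lambda>k. norm (f' (x (Suc k)) + (\<mu> k o\<^sub>L g' (x (Suc k))))) \<longlonglongrightarrow> 0"
    unfolding normeq by (rule approx_min)
  have rho_ev: "eventually (\<lambda>k. 1 \<le> \<rho> k) sequentially"
    using rho_inf unfolding filterlim_at_top by blast
  have wm2: "integrable M (\<lambda>t. (wmax t)\<^sup>2)" using wmax(1) unfolding inL2_def by auto
  have bnd: "0 \<le> F k (negY absY (g (x (Suc k)))) \<and>
        F k (negY absY (g (x (Suc k)))) \<le> integral\<^sup>L M (\<lambda>t. (wmax t)\<^sup>2) / \<rho> k"
    if rk: "1 \<le> \<rho> k" for k
  proof -
    define a where "a = e (g (x (Suc k)))"
    define n where "n t = 1/2 * (\<bar>a t\<bar> - a t)" for t
    have aL2: "inL2 M a" unfolding a_def by (rule eL2)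
    have am: "a \<in> borel_measurable M" using aL2 unfolding inL2_def by auto
    have \<Lambda>m: "\<Lambda> k \<in> borel_measurable M" using \<Lambda>L2 unfolding inL2_def by auto
    have enY: "e (negY absY (g (x (Suc k)))) = (\<lambda>t. 1/2 * (e (absY (g (x (Suc k)))) t - a t))"
      unfolding negY_def escale eminus a_def by simp
    have abm: "e (absY (g (x (Suc k)))) \<in> borel_measurable M" using eL2 unfolding inL2_def by auto
    have "F k (negY absY (g (x (Suc k)))) = integral\<^sup>L M (\<lambda>t. \<Lambda> k t * n t)"
      unfolding F_def enY
    proof (rule integral_cong_AE)
      show "(\<lambda>t. \<Lambda> k t * (1/2 * (e (absY (g (x (Suc k)))) t - a t))) \<in> borel_measurable M"
        using \<Lambda>m abm am by auto
      show "(\<lambda>t. \<Lambda> k t * n t) \<in> borel_measurable M" unfolding n_def using \<Lambda>m am by auto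
      show "AE t in M. \<Lambda> k t * (1/2 * (e (absY (g (x (Suc k)))) t - a t)) = \<Lambda> k t * n t"
        using absY[of "g (x (Suc k))"] unfolding n_def a_def by auto
    qed
    moreover have pw: "AE t in M. 0 \<le> \<Lambda> k t * n t \<and> \<Lambda> k t * n t \<le> (wmax t)\<^sup>2 / \<rho> k"
      using w_bounds[of k]
    proof eventually_elim
      case (elim t)
      show ?case unfolding \<Lambda>_def n_def a_def
        by (rule pointwise_bound) (use elim rk in auto)
    qed
    moreover have "integrable M (\<lambda>t. \<Lambda> k t * n t)"
    proof (rule Bochner_Integration.integrable_bound[where f="\<lambda>t. (wmax t)\<^sup>2 / \<rho> k"])
      show "integrable M (\<lambda>t. (wmax t)\<^sup>2 / \<rho> k)" using wm2 by auto
      show "(\<lambda>t. \<Lambda> k t * n t) \<in> borel_measurable M" unfolding n_def using \<Lambda>m am by auto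
      show "AE t in M. norm (\<Lambda> k t * n t) \<le> norm ((wmax t)\<^sup>2 / \<rho> k)"
        using pw by eventually_elim (use rk in auto)
    qed
    moreover have "integral\<^sup>L M (\<lambda>t. (wmax t)\<^sup>2 / \<rho> k) = integral\<^sup>L M (\<lambda>t. (wmax t)\<^sup>2) / \<rho> k"
      by simp
    ultimately show ?thesis
      using integral_nonneg_AE[of "\<lambda>t. \<Lambda> k t * n t" M]
        integral_mono_AE[of M "\<lambda>t. \<Lambda> k t * n t" "\<lambda>t. (wmax t)\<^sup>2 / \<rho> k"] wm2
      by auto
  qed
  have lim4: "(\<lambda>k. blinfun_apply (\<mu> k) (negY absY (g (x (Suc k))))) \<longlonglongrightarrow> 0"
    unfolding \<mu>app
  proof (rule tendsto_sandwich[where f="\<lambda>_. 0" and h="\<lambda>k. integral\<^sup>L M (\<lambda>t. (wmax t)\<^sup>2) / \<rho> k"])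
    show "eventually (\<lambda>k. 0 \<le> F k (negY absY (g (x (Suc k))))) sequentially"
      using rho_ev by eventually_elim (use bnd in blast)
    show "eventually (\<lambda>k. F k (negY absY (g (x (Suc k)))) \<le> integral\<^sup>L M (\<lambda>t. (wmax t)\<^sup>2) / \<rho> k) sequentially"
      using rho_ev by eventually_elim (use bnd in blast)
    show "(\<lambda>_. 0::real) \<longlonglongrightarrow> 0" by simp
    show "(\<lambda>k. integral\<^sup>L M (\<lambda>t. (wmax t)\<^sup>2) / \<rho> k) \<longlonglongrightarrow> 0"
      by (rule tendsto_divide_0[OF tendsto_const filterlim_at_top_imp_at_infinity[OF rho_inf]])
  qed
  obtain \<phi> :: "nat \<Rightarrow> nat" where \<phi>: "strict_mono \<phi>" "(x \<circ> \<phi>) \<longlonglongrightarrow> xbar" using limpt by blast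
  define \<psi> where "\<psi> k = \<phi> (Suc k) - 1" for k
  have ge: "Suc k \<le> \<phi> (Suc k)" for k using seq_suble[OF \<phi>(1)] by blast
  have S\<psi>: "Suc (\<psi> k) = \<phi> (Suc k)" for k unfolding \<psi>_def using ge[of k] by simp
  have \<psi>mono: "strict_mono \<psi>"
    unfolding strict_mono_Suc_iff
  proof
    fix k
    have "\<phi> (Suc k) < \<phi> (Suc (Suc k))" using \<phi>(1) by (simp add: strict_mono_def)
    then show "\<psi> k < \<psi> (Suc k)" using S\<psi>[of k] S\<psi>[of "Suc k"] by simp
  qed
  define yy where "yy k = x (Suc (\<psi> k))" for k
  define \<mu>' where "\<mu>' k = \<mu> (\<psi> k)" for k
  have "yy \<longlonglongrightarrow> xbar"
  proof -
    have "(\<lambda>k. (x \<circ> \<phi>) (Suc k)) \<longlonglongrightarrow> xbar" by (rule LIMSEQ_Suc[OF \<phi>(2)])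
    moreover have "yy = (\<lambda>k. (x \<circ> \<phi>) (Suc k))" unfolding yy_def using S\<psi> by (auto simp: fun_eq_iff)
    ultimately show ?thesis by simp
  qed
  moreover have "\<forall>k. \<mu>' k \<in> KYplus M e" unfolding \<mu>'_def using \<mu>K by blast
  moreover have "(\<lambda>k. norm (f' (yy k) + (\<mu>' k o\<^sub>L g' (yy k)))) \<longlonglongrightarrow> 0"
    using LIMSEQ_subseq_LIMSEQ[OF lim3 \<psi>mono] unfolding yy_def \<mu>'_def o_def .
  moreover have "(\<lambda>k. blinfun_apply (\<mu>' k) (negY absY (g (yy k)))) \<longlonglongrightarrow> 0"
    using LIMSEQ_subseq_LIMSEQ[OF lim4 \<psi>mono] unfolding yy_def \<mu>'_def o_def .
  ultimately show ?thesis by blast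
qed

end
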